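(* For every integer $n \ge 1$ there exists a word $w_n$ of length $6n$ over an alphabet of $2n$ letters with $\mathrm{E}(w_n) = 1$ such that $$n - \tfrac{1}{6} < \mathrm{E}_{\mathcal{I}}(w_n) < \infty,$$ where $\mathrm{E}_{\mathcal{I}}$ is taken with $\Sigma$ the $2n$-letter alphabet of $w_n$ and $\Gamma$ any finite alphabet with at least two letters.
   Context: For a nonempty word $v$ and integer $p\ge 0$, $v^{p/|v|}$ denotes the prefix of length $p$ of $vvv\cdots$. For a nonempty finite word $u$, $\mathrm{E}(u) = \sup\{ r \in \mathbb{Q} : u = v^r \text{ for some nonempty word } v\}$. $\mathcal{I}$ is the set of injective morphisms $\Sigma^* \to \Gamma^*$, and for $w\in\Sigma^+$, $\mathrm{E}_{\mathcal{I}}(w) = \sup\{\mathrm{E}(h(w)) : h \in \mathcal{I}\}$. *)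

theory Defs
  imports Main "HOL-Library.Extended_Real"
begin

text \<open>Words are lists; letters are natural numbers (any finite alphabet is
isomorphic to a finite set of naturals).\<close>

definition word_pow_prefix :: "'a list \<Rightarrow> nat \<Rightarrow> 'a list" where
  "word_pow_prefix v p = take p (concat (replicate p v))"

definition is_rat_power :: "'a list \<Rightarrow> 'a list \<Rightarrow> rat \<Rightarrow> bool" where
  "is_rat_power u v r \<longleftrightarrow> v \<noteq> [] \<and> r \<ge> 0 \<and> r * of_nat (length v) = of_nat (length u)
     \<and> u = word_pow_prefix v (length u)"

definition crit_exp :: "'a list \<Rightarrow> real" where
  "crit_exp u = Sup {real_of_rat r | r. \<exists>v. is_rat_power u v r}"

definition morph :: "('a \<Rightarrow> 'b list) \<Rightarrow> 'a list \<Rightarrow> 'b list" where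
  "morph h u = concat (map h u)"

definition inj_morphs :: "'a set \<Rightarrow> 'b set \<Rightarrow> ('a \<Rightarrow> 'b list) set" where
  "inj_morphs Sig Gam = {h. (\<forall>a\<in>Sig. h a \<in> lists Gam) \<and> inj_on (morph h) (lists Sig)}"

text \<open>E_I(w), with Sigma the alphabet of w (the set of its letters) and target alphabet Gamma.\<close>
definition crit_exp_I :: "'b set \<Rightarrow> 'a list \<Rightarrow> ereal" where
  "crit_exp_I Gamma w = (SUP h \<in> inj_morphs (set w) Gamma. ereal (crit_exp (morph h w)))"

end

theory Submission
  imports Defs
begin

definition per :: "'a list \<Rightarrow> nat \<Rightarrow> bool" where
  "per u p \<longleftrightarrow> (\<forall>i. i + p < length u \<longrightarrow> u ! i = u ! (i + p))"

lemma per_mod: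
  assumes "per u P" "0 < P" "i < length u"
  shows "u ! i = u ! (i mod P)"
  using assms(3)
proof (induction i rule: less_induct)
  case (less i)
  show ?case
  proof (cases "i < P")
    case True then show ?thesis by simp
  next
    case False
    then have "i - P < i" using assms(2) by simp
    then have "u ! (i - P) = u ! ((i - P) mod P)" using less by simp
    moreover have "u ! (i - P) = u ! i" using assms(1) less.prems False unfolding per_def
      by (metis le_add_diff_inverse2 not_less)
    moreover have "(i - P) mod P = i mod P" using False by (simp add: le_mod_geq)
    ultimately show ?thesis by simp
  qed
qed

lemma sync:
  assumes per: "per u P" and P0: "0 < P"
    and minimal: "\<And>q. 0 < q \<Longrightarrow> q < P \<Longrightarrow> \<not> per u q"
    and occ: "\<And>s. s < L \<Longrightarrow> u ! (a + s) = u ! (a + d + s)"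
    and len: "a + d + L \<le> length u" and PL: "P \<le> L"
  shows "P dvd d"
proof -
  define f where "f x = u ! (x mod P)" for x
  have fu: "u ! i = f i" if "i < length u" for i
    using per_mod[OF per P0 that] by (simp add: f_def)
  have fd: "f (x + d) = f x" for x
  proof -
    define s where "s = (x + (P - a mod P)) mod P"
    have sP: "s < P" using P0 by (simp add: s_def)
    have as: "(a + s) mod P = x mod P"
    proof -
      have "(a + s) mod P = (a + (x + (P - a mod P))) mod P"
        by (simp add: s_def mod_add_right_eq)
      also have "a + (x + (P - a mod P)) = x + P * (a div P) + P"
      proof -
        have "a = P * (a div P) + a mod P" by simp
        then show ?thesis using mod_less_divisor[OF P0, of a] by linarith
      qed
      also have "(x + P * (a div P) + P) mod P = x mod P" by simp
      finally show ?thesis .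
    qed
    have "f x = f (a + s)" using as by (simp add: f_def)
    also have "\<dots> = u ! (a + s)" using fu sP PL len by simp
    also have "\<dots> = u ! (a + d + s)" using occ sP PL by simp
    also have "\<dots> = f (a + d + s)" using fu sP PL len by simp
    also have "\<dots> = f (x + d)"
    proof -
      have "(a + d + s) mod P = (x + d) mod P"
        by (metis as add.commute add.left_commute mod_add_right_eq)
      then show ?thesis by (simp add: f_def)
    qed
    finally show ?thesis by simp
  qed
  define d' where "d' = d mod P"
  have fd': "f (x + d') = f x" for x
  proof -
    have "d = d' + P * (d div P)" by (simp add: d'_def)
    then have "f (x + d) = f (x + d' + P * (d div P))" by (simp add: add.assoc)
    also have "\<dots> = f (x + d')" by (simp add: f_def)
    finally show ?thesis using fd by simp
  qed
  show ?thesis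
  proof (rule ccontr)
    assume "\<not> P dvd d"
    then have "0 < d'" "d' < P" using P0 by (auto simp: d'_def dvd_eq_mod_eq_0)
    moreover have "per u d'" unfolding per_def
    proof (intro allI impI)
      fix i assume "i + d' < length u"
      then show "u ! i = u ! (i + d')" using fu fd'[of i] by simp
    qed
    ultimately show False using minimal by blast
  qed
qed

lemma commute:
  assumes per: "per u P" and P0: "0 < P"
    and u: "u = pre @ X @ Y @ post" and dX: "P dvd length X" and dY: "P dvd length Y"
  shows "X @ Y = Y @ X"
proof (rule nth_equalityI)
  show "length (X @ Y) = length (Y @ X)" by simp
  fix i assume i: "i < length (X @ Y)"
  let ?a = "length pre"
  have uX: "u ! (?a + s) = X ! s" if "s < length X" for s
    using that u by (simp add: nth_append)
  have uY: "u ! (?a + length X + s) = Y ! s" if "s < length Y" for s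
    using that u by (simp add: nth_append)
  have cong: "u ! j = u ! k" if "j < length u" "k < length u" "j mod P = k mod P" for j k
    using per_mod[OF per P0 that(1)] per_mod[OF per P0 that(2)] that(3) by simp
  have lu: "?a + length X + length Y \<le> length u" using u by simp
  have L: "(X @ Y) ! i = u ! (?a + i)"
  proof (cases "i < length X")
    case True then show ?thesis using uX by (simp add: nth_append)
  next
    case False then show ?thesis using uY[of "i - length X"] i by (simp add: nth_append)
  qed
  have R: "(Y @ X) ! i = u ! (?a + i)"
  proof (cases "i < length Y")
    case True
    then have "(Y @ X) ! i = u ! (?a + length X + i)" using uY by (simp add: nth_append)
    also have "\<dots> = u ! (?a + i)"
    proof (rule cong)
      show "?a + length X + i < length u" "?a + i < length u" using i lu True by auto
      obtain q where q: "length X = P * q" using dX by blast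
      have "?a + length X + i = (?a + i) + P * q" using q by simp
      then show "(?a + length X + i) mod P = (?a + i) mod P" by (metis mod_mult_self2)
    qed
    finally show ?thesis .
  next
    case False
    then have "(Y @ X) ! i = X ! (i - length Y)" by (simp add: nth_append)
    also have "\<dots> = u ! (?a + (i - length Y))" using uX[of "i - length Y"] i False by simp
    also have "\<dots> = u ! (?a + i)"
    proof (rule cong)
      show "?a + (i - length Y) < length u" "?a + i < length u" using i lu False by auto
      obtain q where q: "length Y = P * q" using dY by blast
      have "?a + i = ?a + (i - length Y) + P * q" using False q by simp
      then show "(?a + (i - length Y)) mod P = (?a + i) mod P" by (metis mod_mult_self2)
    qed
    finally show ?thesis .
  qed
  show "(X @ Y) ! i = (Y @ X) ! i" using L R by simp
qed

lemma nth_concat_replicate: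
  "i < m * length v \<Longrightarrow> concat (replicate m v) ! i = v ! (i mod length v)"
proof (induction m arbitrary: i)
  case 0 then show ?case by simp
next
  case (Suc m)
  show ?case
  proof (cases "i < length v")
    case True then show ?thesis by (simp add: nth_append)
  next
    case False
    then have "concat (replicate (Suc m) v) ! i = concat (replicate m v) ! (i - length v)"
      by (simp add: nth_append)
    also have "\<dots> = v ! ((i - length v) mod length v)" using Suc False by simp
    also have "(i - length v) mod length v = i mod length v" using False by (simp add: le_mod_geq)
    finally show ?thesis .
  qed
qed

lemma pow_prefix_nth:
  assumes "v \<noteq> []" "u = word_pow_prefix v (length u)" "i < length u"
  shows "u ! i = v ! (i mod length v)"
proof -
  have "1 \<le> length v" using assms(1) by (simp add: Suc_le_eq)
  then have "length u * 1 \<le> length u * length v" by (rule mult_le_mono2)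
  then have il: "i < length u * length v" using assms(3) by linarith
  have "u ! i = word_pow_prefix v (length u) ! i" using assms(2) by (rule arg_cong)
  also have "\<dots> = concat (replicate (length u) v) ! i"
    unfolding word_pow_prefix_def using assms(3) by simp
  also have "\<dots> = v ! (i mod length v)" using il by (rule nth_concat_replicate)
  finally show ?thesis .
qed

lemma pow_prefix_per:
  assumes "v \<noteq> []" "u = word_pow_prefix v (length u)"
  shows "per u (length v)"
  unfolding per_def
proof (intro allI impI)
  fix i assume "i + length v < length u"
  then show "u ! i = u ! (i + length v)"
    using pow_prefix_nth[OF assms] by simp
qed

lemma self_pow_prefix: "u \<noteq> [] \<Longrightarrow> u = word_pow_prefix u (length u)"
  unfolding word_pow_prefix_def by (cases "length u") auto

definition blk :: "nat \<Rightarrow> nat list" where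
  "blk k = [2*k, 2*k, 2*k+1, 2*k, 2*k+1, 2*k+1]"

definition ww :: "nat \<Rightarrow> nat list" where
  "ww n = concat (map blk [0..<n])"

lemma ww_Suc: "ww (Suc n) = ww n @ blk n"
  by (simp add: ww_def)

lemma length_ww: "length (ww n) = 6 * n"
  by (induction n) (simp_all add: ww_def blk_def)

lemma set_ww: "set (ww n) = {0..<2*n}"
proof (induction n)
  case 0 then show ?case by (simp add: ww_def)
next
  case (Suc n)
  then show ?case by (auto simp: ww_Suc blk_def)
qed

lemma card_set_ww: "card (set (ww n)) = 2 * n"
  by (simp add: set_ww)

lemma ww_split: "k < n \<Longrightarrow> ww n = ww k @ blk k @ concat (map blk [Suc k..<n])"
proof -
  assume "k < n"
  then have "[0..<n] = [0..<k] @ [k..<n]" using upt_add_eq_append[of 0 k "n-k"] by simp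
  also have "[k..<n] = k # [Suc k..<n]" using \<open>k < n\<close> by (rule upt_conv_Cons)
  finally have "[0..<n] = [0..<k] @ k # [Suc k..<n]" .
  then show ?thesis by (simp add: ww_def)
qed

lemma ww_first:
  assumes "n \<ge> 1"
  shows "ww n = blk 0 @ concat (map blk [1..<n])"
  using ww_split[of 0 n] assms by (simp add: ww_def)

lemma ww_tail_ge: "x \<in> set (concat (map blk [1..<n])) \<Longrightarrow> x \<ge> 2"
  by (auto simp: blk_def)

lemma ww_unbordered:
  assumes n: "n \<ge> 1" and p: "per (ww n) p" "0 < p" "p < 6 * n"
  shows False
proof -
  let ?t = "concat (map blk [1..<n])"
  have w: "ww n = blk 0 @ ?t" using ww_first[OF n] .
  have L: "length (ww n) = 6 * n" by (rule length_ww)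
  have lb: "length (blk 0) = 6" by (simp add: blk_def)
  have small: "ww n ! i = blk 0 ! i" if "i < 6" for i
    using that lb by (simp add: w nth_append)
  have b0: "blk 0 = [0,0,1,0,1,1]" by (simp add: blk_def)
  have nth: "ww n ! 0 = 0" "ww n ! 1 = 0" "ww n ! 2 = 1" "ww n ! 3 = 0" "ww n ! 4 = 1" "ww n ! 5 = 1"
    by (simp_all only: small b0) simp_all
  have big: "ww n ! q \<ge> 2" if "6 \<le> q" "q < 6 * n" for q
  proof -
    define r where "r = q - 6"
    have r: "q = 6 + r" using that(1) by (simp add: r_def)
    have "ww n ! q = (blk 0 @ ?t) ! (length (blk 0) + r)" using w r lb by simp
    also have "\<dots> = ?t ! r" by (rule nth_append_length_plus)
    finally have e: "ww n ! q = ?t ! r" .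
    have "r < length ?t" using that L w r lb by simp
    then have "?t ! r \<in> set ?t" by (rule nth_mem)
    then have "?t ! r \<ge> 2" by (rule ww_tail_ge)
    then show ?thesis using e by simp
  qed
  have pp: "ww n ! i = ww n ! (i + p)" if "i + p < 6 * n" for i
    using p(1)[unfolded per_def, rule_format, of i] that L by argo
  have n6: "6 \<le> 6 * n" using n by simp
  have e0: "ww n ! 0 = ww n ! p" using pp[of 0] p(3) by simp
  consider "p = 1" | "p = 2" | "p = 3" | "p = 4" | "p = 5" | "6 \<le> p" using p(2) by linarith
  then show False
  proof cases
    case 1
    then have "ww n ! 1 = ww n ! 2" using pp[of 1] n6 by (simp add: numeral_2_eq_2)
    then show False using nth by simp
  next
    case 2 then show False using e0 nth by simp
  next
    case 3
    then have "ww n ! 1 = ww n ! 4" using pp[of 1] n6 by simp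
    then show False using nth by simp
  next
    case 4 then show False using e0 nth by simp
  next
    case 5 then show False using e0 nth by simp
  next
    case 6 then show False using e0 nth big[of p] p by simp
  qed
qed

lemma morph_append[simp]: "morph h (a @ b) = morph h a @ morph h b" by (simp add: morph_def)
lemma morph_Cons[simp]: "morph h (a # b) = h a @ morph h b" by (simp add: morph_def)
lemma morph_Nil[simp]: "morph h [] = []" by (simp add: morph_def)

lemma sum_bound: "(\<forall>x\<in>set xs. f x \<le> (P::nat)) \<Longrightarrow> sum_list (map f xs) \<le> length xs * P"
  by (induction xs) auto

lemma length_morph: "length (morph h w) = sum_list (map (\<lambda>c. length (h c)) w)"
  by (induction w) auto

lemma key:
  assumes per: "per u P" and P0: "0 < P"
    and minimal: "\<And>q. 0 < q \<Longrightarrow> q < P \<Longrightarrow> \<not> per u q"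
    and u: "u = pre @ (Z @ X') @ (Z @ Y') @ Z @ post" and PL: "P \<le> length Z"
  shows "(Z @ X') @ (Z @ Y') = (Z @ Y') @ (Z @ X')"
proof -
  let ?a = "length pre" let ?d = "length (Z @ X')" let ?e = "length (Z @ Y')"
  have d: "P dvd ?d"
  proof (rule sync[OF per P0 minimal, of "length Z" ?a])
    show "u ! (?a + s) = u ! (?a + ?d + s)" if "s < length Z" for s
      using that u by (simp add: nth_append)
    show "?a + ?d + length Z \<le> length u" using u by simp
    show "P \<le> length Z" by fact
  qed
  have e: "P dvd ?e"
  proof (rule sync[OF per P0 minimal, of "length Z" "?a + ?d"])
    show "u ! (?a + ?d + s) = u ! (?a + ?d + ?e + s)" if "s < length Z" for s
      using that u by (simp add: nth_append)
    show "?a + ?d + ?e + length Z \<le> length u" using u by simp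
    show "P \<le> length Z" by fact
  qed
  have u2: "u = pre @ (Z @ X') @ (Z @ Y') @ (Z @ post)" using u by simp
  show ?thesis by (rule commute[OF per P0 u2 d e])
qed

lemma ww_decomp:
  assumes "c \<in> set (ww n)"
  shows "\<exists>pre s1 s2 post. ww n = pre @ (c # s1) @ (c # s2) @ [c] @ post \<and>
           (c # s1) @ (c # s2) \<noteq> (c # s2) @ (c # s1)"
proof -
  from assms obtain k where k: "k < n" "c \<in> set (blk k)" by (auto simp: ww_def)
  let ?R = "concat (map blk [Suc k..<n])"
  have w: "ww n = ww k @ blk k @ ?R" by (rule ww_split[OF k(1)])
  from k(2) have "c = 2*k \<or> c = 2*k+1" by (auto simp: blk_def)
  then show ?thesis
  proof
    assume c: "c = 2*k"
    have "ww n = ww k @ (c # []) @ (c # [2*k+1]) @ [c] @ ([2*k+1,2*k+1] @ ?R)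
          \<and> (c # []) @ (c # [2*k+1]) \<noteq> (c # [2*k+1]) @ (c # [])"
      using w c by (simp add: blk_def)
    then show ?thesis by blast
  next
    assume c: "c = 2*k+1"
    have "ww n = (ww k @ [2*k,2*k]) @ (c # [2*k]) @ (c # []) @ [c] @ ?R
          \<and> (c # [2*k]) @ (c # []) \<noteq> (c # []) @ (c # [2*k])"
      using w c by (simp add: blk_def)
    then show ?thesis by blast
  qed
qed

lemma inj_nonempty:
  assumes "inj_on (morph h) (lists S)" "c \<in> S"
  shows "h c \<noteq> []"
proof
  assume "h c = []"
  then have "morph h [c] = morph h []" by simp
  moreover have "[c] \<in> lists S" "[] \<in> lists S" using assms(2) by auto
  ultimately have "[c] = []" by (rule inj_onD[OF assms(1)])
  then show False by simp
qed

lemma upper: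
  assumes n: "n \<ge> 1" and injh: "inj_on (morph h) (lists (set (ww n)))"
  shows "crit_exp (morph h (ww n)) \<le> real (6 * n)"
proof -
  let ?w = "ww n"
  define u where "u = morph h ?w"
  define S where "S = {real_of_rat r | r. \<exists>v. is_rat_power u v r}"
  have wne: "?w \<noteq> []" using length_ww[of n] n by auto
  have une: "u \<noteq> []"
  proof -
    obtain a t where at: "?w = a # t" using wne by (cases ?w) auto
    then have "a \<in> set ?w" by simp
    then have "h a \<noteq> []" using inj_nonempty[OF injh] by simp
    then show ?thesis using at by (simp add: u_def)
  qed
  have S1: "1 \<in> S"
  proof -
    have "is_rat_power u u 1" unfolding is_rat_power_def using une self_pow_prefix[OF une] by simp
    then have "real_of_rat 1 \<in> S" unfolding S_def by blast
    then show ?thesis by simp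
  qed
  have bound: "x \<le> real (6*n)" if "x \<in> S" for x
  proof -
    from that obtain r v where x: "x = real_of_rat r" and rp: "is_rat_power u v r" unfolding S_def by blast
    from rp have vne: "v \<noteq> []" and r0: "r \<ge> 0" and rv: "r * of_nat (length v) = of_nat (length u)"
      and up: "u = word_pow_prefix v (length u)" unfolding is_rat_power_def by auto
    show ?thesis
    proof (cases "length u \<le> 6 * n * length v")
      case True
      have lv: "0 < length v" using vne by simp
      have "r * of_nat (length v) \<le> of_nat (6*n) * of_nat (length v)"
        using rv True by (metis of_nat_le_iff of_nat_mult)
      then have "r \<le> of_nat (6*n)" using lv by simp
      then have "real_of_rat r \<le> real_of_rat (of_nat (6*n))" by (simp only: of_rat_less_eq)
      then show ?thesis unfolding x by (simp only: of_rat_of_nat_eq)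
    next
      case False
      have pv: "per u (length v)" by (rule pow_prefix_per[OF vne up])
      define P where "P = (LEAST q. 0 < q \<and> per u q)"
      have ex: "0 < length v \<and> per u (length v)" using vne pv by simp
      have PP: "0 < P \<and> per u P" unfolding P_def by (rule LeastI[of "\<lambda>q. 0 < q \<and> per u q", OF ex])
      have Pv: "P \<le> length v" unfolding P_def by (rule Least_le[of "\<lambda>q. 0 < q \<and> per u q", OF ex])
      have minimal: "\<not> per u q" if "0 < q" "q < P" for q
        using not_less_Least[of q "\<lambda>q. 0 < q \<and> per u q"] that unfolding P_def by blast
      have "6 * n * P \<le> 6 * n * length v" using Pv by simp
      then have bigN: "6 * n * P < length u" using False by linarith
      have "\<exists>c\<in>set ?w. P < length (h c)"
      proof (rule ccontr)
        assume "\<not> ?thesis"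
        then have "\<forall>c\<in>set ?w. length (h c) \<le> P" by (simp add: not_less)
        then have "sum_list (map (\<lambda>c. length (h c)) ?w) \<le> length ?w * P" by (rule sum_bound)
        then have "length u \<le> 6 * n * P" unfolding u_def length_morph length_ww .
        then show False using bigN by simp
      qed
      then obtain c where c: "c \<in> set ?w" "P < length (h c)" by blast
      obtain pre s1 s2 post where dec: "?w = pre @ (c # s1) @ (c # s2) @ [c] @ post"
        and ne: "(c # s1) @ (c # s2) \<noteq> (c # s2) @ (c # s1)"
        using ww_decomp[OF c(1)] by blast
      have u_dec: "u = morph h pre @ (h c @ morph h s1) @ (h c @ morph h s2) @ h c @ morph h post"
        unfolding u_def by (subst dec) simp
      have comm: "(h c @ morph h s1) @ (h c @ morph h s2) = (h c @ morph h s2) @ (h c @ morph h s1)"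
        using key[OF conjunct2[OF PP] conjunct1[OF PP] minimal u_dec] c(2) by simp
      have eqm: "morph h ((c # s1) @ (c # s2)) = morph h ((c # s2) @ (c # s1))" using comm by simp
      have sw: "set ?w = set (pre @ (c # s1) @ (c # s2) @ [c] @ post)" using dec by (rule arg_cong)
      have m1: "(c # s1) @ (c # s2) \<in> lists (set ?w)" using sw by auto
      have m2: "(c # s2) @ (c # s1) \<in> lists (set ?w)" using sw by auto
      have "(c # s1) @ (c # s2) = (c # s2) @ (c # s1)" using inj_onD[OF injh eqm m1 m2] .
      with ne show ?thesis by simp
    qed
  qed
  have "Sup S \<le> real (6 * n)" using S1 bound by (intro cSup_least) auto
  then show ?thesis unfolding crit_exp_def S_def u_def .
qed

definition Qw :: "nat \<Rightarrow> nat \<Rightarrow> nat \<Rightarrow> nat list" where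
 "Qw M x y = y # replicate M x @ y # replicate (M+1) x @ y # replicate (M-1) x @ y #
     replicate (M+1) x @ y # replicate M x @ [y]"

lemma rep_y_inj: "x \<noteq> y \<Longrightarrow> replicate a x @ y # r1 = replicate b x @ y # r2 \<Longrightarrow> a = b \<and> r1 = r2"
proof (induction a arbitrary: b)
  case 0 then show ?case by (cases b) auto
next
  case (Suc a) then show ?case by (cases b) auto
qed

lemma morph_inj_gen:
  assumes xy: "x \<noteq> y"
  shows "morph (\<lambda>c. replicate c x @ y # g c) s = morph (\<lambda>c. replicate c x @ y # g c) t \<Longrightarrow> s = t"
proof (induction s arbitrary: t)
  case Nil then show ?case by (cases t) auto
next
  case (Cons a s)
  show ?case
  proof (cases t)
    case Nil then show ?thesis using Cons.prems by simp
  next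
    case (Cons b t')
    let ?h = "\<lambda>c. replicate c x @ y # g c"
    from Cons.prems \<open>t = b # t'\<close>
    have "replicate a x @ y # (g a @ morph ?h s) = replicate b x @ y # (g b @ morph ?h t')" by simp
    from rep_y_inj[OF xy this] have "a = b" "g a @ morph ?h s = g b @ morph ?h t'" by auto
    then have "morph ?h s = morph ?h t'" by simp
    then have "s = t'" by (rule Cons.IH)
    then show ?thesis using \<open>a = b\<close> \<open>t = b # t'\<close> by simp
  qed
qed

lemma rep_merge: "replicate a x @ replicate b x @ r = replicate (a+b) x @ r"
  by (simp add: replicate_add)

lemma blk_img:
  assumes k: "2 * k + 1 \<le> M"
  shows "morph (\<lambda>c. replicate c x @ y # replicate (M - c) x) (blk k)
     = replicate (2*k) x @ Qw M x y @ replicate (M - (2*k+1)) x"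
proof -
  have a1: "M - 2*k + 2*k = M" using k by simp
  have a2: "M - 2*k + (2*k+1) = M+1" using k by simp
  have a3: "M - (2*k+1) + 2*k = M - 1" using k by simp
  have a4: "M - (2*k+1) + (2*k+1) = M" using k by simp
  show ?thesis
    unfolding blk_def Qw_def
    by (simp only: morph_Cons morph_Nil append_assoc append_Cons append_Nil rep_merge a1 a2 a3 a4 append.right_neutral)
qed

lemma ww_img:
  assumes "m \<le> n"
  shows "morph (\<lambda>c. replicate c x @ y # replicate (2*n - c) x) (ww m) @ replicate (2*m) x
     = concat (replicate m (Qw (2*n) x y @ replicate (2*n+1) x))"
  using assms
proof (induction m)
  case 0 then show ?case by (simp add: ww_def)
next
  case (Suc m)
  let ?h = "\<lambda>c. replicate c x @ y # replicate (2*n - c) x"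
  let ?V = "Qw (2*n) x y @ replicate (2*n+1) x"
  have k: "2 * m + 1 \<le> 2 * n" using Suc.prems by simp
  have "morph ?h (ww (Suc m)) @ replicate (2 * Suc m) x
      = morph ?h (ww m) @ replicate (2*m) x @ Qw (2*n) x y @ replicate (2*n - (2*m+1)) x @ replicate (2*m+2) x"
    by (simp add: ww_Suc blk_img[OF k])
  also have "replicate (2*n - (2*m+1)) x @ replicate (2*m+2) x = replicate (2*n+1) x"
  proof -
    have eq: "2*n - (2*m+1) + (2*m+2) = 2*n+1" using k by simp
    show ?thesis by (simp only: replicate_add[symmetric] eq)
  qed
  also have "morph ?h (ww m) @ replicate (2*m) x @ Qw (2*n) x y @ replicate (2*n+1) x
      = (morph ?h (ww m) @ replicate (2*m) x) @ ?V" by simp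
  also have "\<dots> = concat (replicate m ?V) @ ?V" using Suc by simp
  also have "\<dots> = concat (replicate m ?V @ [?V])" by simp
  also have "replicate m ?V @ [?V] = replicate (Suc m) ?V" by (simp add: replicate_append_same)
  finally show ?case .
qed

lemma rat_power_le_len:
  assumes "is_rat_power u v r"
  shows "real_of_rat r \<le> real (length u)"
proof -
  from assms have vne: "v \<noteq> []" and r0: "r \<ge> 0" and rv: "r * of_nat (length v) = of_nat (length u)"
    unfolding is_rat_power_def by auto
  have "1 \<le> (of_nat (length v) :: rat)" using vne by (simp add: Suc_le_eq)
  then have "r * 1 \<le> r * of_nat (length v)" using r0 by (rule mult_left_mono)
  then have "r \<le> of_nat (length u)" using rv by simp
  then have "real_of_rat r \<le> real_of_rat (of_nat (length u))" by (simp only: of_rat_less_eq)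
  then show ?thesis by (simp only: of_rat_of_nat_eq)
qed

lemma crit_exp_ge:
  assumes "is_rat_power u v r"
  shows "real_of_rat r \<le> crit_exp u"
proof -
  let ?S = "{real_of_rat r | r. \<exists>v. is_rat_power u v r}"
  have bdd: "bdd_above ?S"
  proof (rule bdd_aboveI)
    fix z assume "z \<in> ?S"
    then obtain r' v' where "z = real_of_rat r'" "is_rat_power u v' r'" by blast
    then show "z \<le> real (length u)" using rat_power_le_len by simp
  qed
  have mem: "real_of_rat r \<in> ?S" using assms by blast
  show ?thesis unfolding crit_exp_def by (rule cSup_upper[OF mem bdd])
qed

lemma lower:
  fixes x y :: nat
  assumes n: "n \<ge> 1" and xy: "x \<noteq> y"
  shows "real n - 1/6 < crit_exp (morph (\<lambda>c. replicate c x @ y # replicate (2*n - c) x) (ww n))"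
proof -
  let ?h = "\<lambda>c. replicate c x @ y # replicate (2*n - c) x"
  define u where "u = morph ?h (ww n)"
  define V where "V = Qw (2*n) x y @ replicate (2*n+1) x"
  define P where "P = length V"
  have P: "P = 12*n + 8" using n unfolding P_def V_def Qw_def by simp
  have ue: "u @ replicate (2*n) x = concat (replicate n V)"
    using ww_img[of n n x y] by (simp add: u_def V_def)
  define N where "N = length u"
  have lc: "length (concat (replicate n V)) = n * P"
    unfolding P_def by (simp add: length_concat sum_list_replicate)
  have NP: "N + 2*n = n * P" using arg_cong[OF ue, of length] lc by (simp add: N_def)
  have NN: "N = 12*n*n + 6*n" using NP P by (simp add: algebra_simps)
  have nN: "n \<le> N" using NN by simp
  have up: "u = word_pow_prefix V N"
  proof -
    have "concat (replicate N V) = concat (replicate n V) @ concat (replicate (N - n) V)"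
    proof -
      have "replicate N V = replicate n V @ replicate (N - n) V"
        using nN by (metis le_add_diff_inverse replicate_add)
      then show ?thesis by simp
    qed
    then have "take N (concat (replicate N V)) = take N (concat (replicate n V))"
      using NP lc by simp
    also have "\<dots> = take N (u @ replicate (2*n) x)" using ue by simp
    also have "\<dots> = u" by (simp add: N_def)
    finally show ?thesis unfolding word_pow_prefix_def by simp
  qed
  have P0: "0 < P" using P by simp
  have rp: "is_rat_power u V (of_nat N / of_nat P)"
    unfolding is_rat_power_def
  proof (intro conjI)
    show "V \<noteq> []" using P0 P_def by auto
    show "0 \<le> (of_nat N / of_nat P :: rat)" by simp
    show "(of_nat N / of_nat P :: rat) * of_nat (length V) = of_nat (length u)"
      using P0 by (simp add: P_def[symmetric] N_def)
    show "u = word_pow_prefix V (length u)" using up by (simp add: N_def)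
  qed
  have ge: "real N / real P \<le> crit_exp u"
    using crit_exp_ge[OF rp] by (simp add: of_rat_divide)
  have "real n - 1/6 < real N / real P"
  proof -
    have "(real n - 1/6) * real P < real N"
      using NN P by (simp add: algebra_simps)
    then show ?thesis using P0 by (simp add: less_divide_eq)
  qed
  then show ?thesis using ge unfolding u_def by linarith
qed

lemma crit_exp_ww:
  assumes n: "n \<ge> 1"
  shows "crit_exp (ww n) = 1"
proof -
  let ?w = "ww n"
  let ?S = "{real_of_rat r | r. \<exists>v. is_rat_power ?w v r}"
  have wne: "?w \<noteq> []" using length_ww[of n] n by auto
  have "is_rat_power ?w ?w 1" unfolding is_rat_power_def using wne self_pow_prefix[OF wne] by simp
  then have "real_of_rat 1 \<in> ?S" by blast
  then have S1: "1 \<in> ?S" by simp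
  have bound: "z \<le> 1" if "z \<in> ?S" for z
  proof -
    from that obtain r v where z: "z = real_of_rat r" and rp: "is_rat_power ?w v r" by blast
    from rp have vne: "v \<noteq> []" and r0: "r \<ge> 0" and rv: "r * of_nat (length v) = of_nat (length ?w)"
      and up: "?w = word_pow_prefix v (length ?w)" unfolding is_rat_power_def by auto
    show ?thesis
    proof (cases "length ?w \<le> length v")
      case True
      have lv: "0 < (of_nat (length v) :: rat)" using vne by simp
      have "r * of_nat (length v) \<le> 1 * of_nat (length v)" using rv True by simp
      then have "r \<le> 1" using lv by (simp only: mult_le_cancel_right)
      then have "real_of_rat r \<le> real_of_rat 1" by (simp only: of_rat_less_eq)
      then show ?thesis using z by simp
    next
      case False
      have "per ?w (length v)" by (rule pow_prefix_per[OF vne up])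
      moreover have "0 < length v" using vne by simp
      moreover have "length v < 6 * n" using False length_ww[of n] by simp
      ultimately show ?thesis using ww_unbordered[OF n] by blast
    qed
  qed
  show ?thesis unfolding crit_exp_def by (rule cSup_eq_maximum[OF S1 bound])
qed

theorem theorem11:
  fixes n :: nat
  assumes "n \<ge> 1"
  shows "\<exists>w :: nat list. length w = 6 * n \<and> card (set w) = 2 * n \<and> crit_exp w = 1 \<and>
    (\<forall>Gamma :: nat set. finite Gamma \<and> card Gamma \<ge> 2 \<longrightarrow>
       ereal (real n - 1 / 6) < crit_exp_I Gamma w \<and> crit_exp_I Gamma w < \<infinity>)"
proof (intro exI[of _ "ww n"] conjI allI impI)
  show "length (ww n) = 6 * n" by (rule length_ww)
  show "card (set (ww n)) = 2 * n" by (rule card_set_ww)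
  show "crit_exp (ww n) = 1" using assms by (rule crit_exp_ww)
  fix Gamma :: "nat set"
  assume G: "finite Gamma \<and> 2 \<le> card Gamma"
  have "Gamma \<noteq> {}" using G by auto
  then obtain x where x: "x \<in> Gamma" by blast
  have "\<not> Gamma \<subseteq> {x}"
  proof
    assume "Gamma \<subseteq> {x}"
    then have "card Gamma \<le> card {x}" by (rule card_mono[rotated]) simp
    with G show False by simp
  qed
  then obtain y where y: "y \<in> Gamma" "y \<noteq> x" by blast
  have xy: "x \<noteq> y" using y by simp
  let ?h = "\<lambda>c. replicate c x @ y # replicate (2*n - c) x"
  have hin: "?h \<in> inj_morphs (set (ww n)) Gamma"
    unfolding inj_morphs_def
  proof (intro CollectI conjI ballI)
    fix a assume "a \<in> set (ww n)"
    show "?h a \<in> lists Gamma" using x y by auto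
  next
    show "inj_on (morph ?h) (lists (set (ww n)))"
      by (rule inj_onI) (rule morph_inj_gen[OF xy])
  qed
  have "ereal (real n - 1/6) < ereal (crit_exp (morph ?h (ww n)))"
    using lower[OF assms xy] by simp
  also have "\<dots> \<le> crit_exp_I Gamma (ww n)"
    unfolding crit_exp_I_def by (rule SUP_upper[OF hin])
  finally show "ereal (real n - 1 / 6) < crit_exp_I Gamma (ww n)" .
  have "crit_exp_I Gamma (ww n) \<le> ereal (real (6 * n))"
    unfolding crit_exp_I_def
  proof (rule SUP_least)
    fix h assume "h \<in> inj_morphs (set (ww n)) Gamma"
    then have "inj_on (morph h) (lists (set (ww n)))" by (simp add: inj_morphs_def)
    then show "ereal (crit_exp (morph h (ww n))) \<le> ereal (real (6 * n))"
      using upper[OF assms] by simp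
  qed
  also have "\<dots> < \<infinity>" by simp
  finally show "crit_exp_I Gamma (ww n) < \<infinity>" .
qed

end
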